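(* If $R$ is a semiquasitriangular structure for a Hopf algebra $H$ (with bijective antipode), then so is $\tau(R^{-1})=R^{-(2)}\otimes R^{-(1)}$, where $\tau:H\otimes H\to H\otimes H$ is the flip $\tau(h\otimes l)=l\otimes h$.
   Context: All vector spaces are over a field $k$, $\otimes=\otimes_k$. For a Hopf algebra $H$ with comultiplication $\Delta$, counit $\epsilon$, antipode $S$, we use Sweedler notation $\Delta(h)=h_1\otimes h_2$, etc. $\operatorname{Z}(H)$ is the centre of $H$. For $R\in H\otimes H$ we write $R=R^{(1)}\otimes R^{(2)}$ (summation understood); $R'^{(1)}\otimes R'^{(2)}$ denotes another copy of $R$; $R^{-1}=R^{-(1)}\otimes R^{-(2)}$. Definition (semiquasitriangular Hopf algebra): a pair $(H,R)$ with $H$ a Hopf algebra with bijective antipode and $R\in H\otimes H$ invertible such that (1) $R^{(1)}_1\otimes R^{(1)}_2\otimes R^{(2)} = R^{(1)}\otimes R'^{(1)}\otimes R^{(2)}R'^{(2)}$; (2) $R^{(1)}\otimes R^{(2)}_1\otimes R^{(2)}_2 = R^{(1)}R'^{(1)}\otimes R'^{(2)}\otimes R^{(2)}$; (3) $R^{(1)}\otimes R^{(2)}_2R'^{(1)}\otimes R^{(2)}_1R'^{(2)} = R^{(1)}\otimes R'^{(1)}R^{(2)}_1\otimes R'^{(2)}R^{(2)}_2$; (4) $R^{(1)}_2R'^{(1)}\otimes R^{(1)}_1R'^{(2)}\otimes R^{(2)} = R'^{(1)}R^{(1)}_1\otimes R'^{(2)}R^{(1)}_2\otimes R^{(2)}$;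 (5) $\nu(h):=R^{(2)}h_2R'^{(2)}\otimes S(h_1)S(R^{(1)})h_3R'^{(1)}\in H\otimes\operatorname{Z}(H)$ for all $h\in H$; (6) $\nu(h)=R^{(1)}h_2R'^{(1)}\otimes S(R'^{(2)})S(h_1)R^{(2)}h_3$ for all $h\in H$. Then $R$ is called a semiquasitriangular structure on $H$. *)

theory Defs
  imports Main "HOL-Library.Poly_Mapping"
begin

(* Every vector space over a field k has a basis (indexed by some set), so it is
isomorphic to the space of finitely supported functions  'i \<Rightarrow>\<^sub>0 'k .
We model the Hopf algebra H as  'i \<Rightarrow>\<^sub>0 'k , H\<otimes>H as  ('i \<times> 'i) \<Rightarrow>\<^sub>0 'k  and
H\<otimes>H\<otimes>H as  ('i \<times> 'i \<times> 'i) \<Rightarrow>\<^sub>0 'k  (bases of tensor products are products of bases).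
Linear and bilinear maps are determined by their values on basis vectors. *)

definition smult :: "'k::semiring_0 \<Rightarrow> ('a \<Rightarrow>\<^sub>0 'k) \<Rightarrow> ('a \<Rightarrow>\<^sub>0 'k)" where
  "smult c v = Poly_Mapping.map (\<lambda>x. c * x) v"

definition bvec :: "'a \<Rightarrow> ('a \<Rightarrow>\<^sub>0 'k::{zero,one})" where
  "bvec a = Poly_Mapping.single a 1"

definition lext :: "('a \<Rightarrow> ('b \<Rightarrow>\<^sub>0 'k::semiring_0)) \<Rightarrow> ('a \<Rightarrow>\<^sub>0 'k) \<Rightarrow> ('b \<Rightarrow>\<^sub>0 'k)" where
  "lext f v = (\<Sum>a\<in>Poly_Mapping.keys v. smult (Poly_Mapping.lookup v a) (f a))"

definition lfun :: "('a \<Rightarrow> 'k::semiring_0) \<Rightarrow> ('a \<Rightarrow>\<^sub>0 'k) \<Rightarrow> 'k" where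
  "lfun f v = (\<Sum>a\<in>Poly_Mapping.keys v. Poly_Mapping.lookup v a * f a)"

definition bext :: "('a \<Rightarrow> 'b \<Rightarrow> ('c \<Rightarrow>\<^sub>0 'k::semiring_0)) \<Rightarrow> ('a \<Rightarrow>\<^sub>0 'k) \<Rightarrow> ('b \<Rightarrow>\<^sub>0 'k) \<Rightarrow> ('c \<Rightarrow>\<^sub>0 'k)" where
  "bext f u v = lext (\<lambda>a. lext (f a) v) u"

definition tens :: "('a \<Rightarrow>\<^sub>0 'k::semiring_1) \<Rightarrow> ('b \<Rightarrow>\<^sub>0 'k) \<Rightarrow> ('a \<times> 'b \<Rightarrow>\<^sub>0 'k)" where
  "tens u v = bext (\<lambda>a b. bvec (a, b)) u v"

definition tens3 :: "('a \<Rightarrow>\<^sub>0 'k::semiring_1) \<Rightarrow> ('b \<Rightarrow>\<^sub>0 'k) \<Rightarrow> ('c \<Rightarrow>\<^sub>0 'k) \<Rightarrow> ('a \<times> 'b \<times> 'c \<Rightarrow>\<^sub>0 'k)" where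
  "tens3 x y z = tens x (tens y z)"

definition flip :: "('a \<times> 'b \<Rightarrow>\<^sub>0 'k::semiring_1) \<Rightarrow> ('b \<times> 'a \<Rightarrow>\<^sub>0 'k)" where
  "flip t = lext (\<lambda>(a, b). bvec (b, a)) t"

record (overloaded) ('i, 'k::zero) hopf_data =
  hmul :: "'i \<Rightarrow> 'i \<Rightarrow> ('i \<Rightarrow>\<^sub>0 'k)"
  hunit :: "'i \<Rightarrow>\<^sub>0 'k"
  hcomul :: "'i \<Rightarrow> ('i \<times> 'i \<Rightarrow>\<^sub>0 'k)"
  hcounit :: "'i \<Rightarrow> 'k"
  hantipode :: "'i \<Rightarrow> ('i \<Rightarrow>\<^sub>0 'k)"

context
  fixes A :: "('i, 'k::field) hopf_data"
begin

definition mul :: "('i \<Rightarrow>\<^sub>0 'k) \<Rightarrow> ('i \<Rightarrow>\<^sub>0 'k) \<Rightarrow> ('i \<Rightarrow>\<^sub>0 'k)" where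
  "mul x y = bext (hmul A) x y"

definition one :: "'i \<Rightarrow>\<^sub>0 'k" where
  "one = hunit A"

definition comul :: "('i \<Rightarrow>\<^sub>0 'k) \<Rightarrow> ('i \<times> 'i \<Rightarrow>\<^sub>0 'k)" where
  "comul x = lext (hcomul A) x"

definition counit :: "('i \<Rightarrow>\<^sub>0 'k) \<Rightarrow> 'k" where
  "counit x = lfun (hcounit A) x"

definition antipode :: "('i \<Rightarrow>\<^sub>0 'k) \<Rightarrow> ('i \<Rightarrow>\<^sub>0 'k)" where
  "antipode x = lext (hantipode A) x"

definition mul2 :: "('i \<times> 'i \<Rightarrow>\<^sub>0 'k) \<Rightarrow> ('i \<times> 'i \<Rightarrow>\<^sub>0 'k) \<Rightarrow> ('i \<times> 'i \<Rightarrow>\<^sub>0 'k)" where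
  "mul2 = bext (\<lambda>(a, b) (c, d). tens (hmul A a c) (hmul A b d))"

definition one2 :: "'i \<times> 'i \<Rightarrow>\<^sub>0 'k" where
  "one2 = tens one one"

definition mul3 :: "('i \<times> 'i \<times> 'i \<Rightarrow>\<^sub>0 'k) \<Rightarrow> ('i \<times> 'i \<times> 'i \<Rightarrow>\<^sub>0 'k) \<Rightarrow> ('i \<times> 'i \<times> 'i \<Rightarrow>\<^sub>0 'k)" where
  "mul3 = bext (\<lambda>(a, b, c) (a', b', c'). tens3 (hmul A a a') (hmul A b b') (hmul A c c'))"

definition comul_left :: "('i \<times> 'i \<Rightarrow>\<^sub>0 'k) \<Rightarrow> ('i \<times> 'i \<times> 'i \<Rightarrow>\<^sub>0 'k)" where
  "comul_left t = lext (\<lambda>(a, b). lext (\<lambda>(c, d). tens3 (bvec c) (bvec d) (bvec b)) (comul (bvec a))) t"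

definition comul_right :: "('i \<times> 'i \<Rightarrow>\<^sub>0 'k) \<Rightarrow> ('i \<times> 'i \<times> 'i \<Rightarrow>\<^sub>0 'k)" where
  "comul_right t = lext (\<lambda>(a, b). lext (\<lambda>(c, d). tens3 (bvec a) (bvec c) (bvec d)) (comul (bvec b))) t"

definition comulop_left :: "('i \<times> 'i \<Rightarrow>\<^sub>0 'k) \<Rightarrow> ('i \<times> 'i \<times> 'i \<Rightarrow>\<^sub>0 'k)" where
  "comulop_left t = lext (\<lambda>(a, b). lext (\<lambda>(c, d). tens3 (bvec d) (bvec c) (bvec b)) (comul (bvec a))) t"

definition comulop_right :: "('i \<times> 'i \<Rightarrow>\<^sub>0 'k) \<Rightarrow> ('i \<times> 'i \<times> 'i \<Rightarrow>\<^sub>0 'k)" where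
  "comulop_right t = lext (\<lambda>(a, b). lext (\<lambda>(c, d). tens3 (bvec a) (bvec d) (bvec c)) (comul (bvec b))) t"

definition comul3 :: "('i \<Rightarrow>\<^sub>0 'k) \<Rightarrow> ('i \<times> 'i \<times> 'i \<Rightarrow>\<^sub>0 'k)" where
  "comul3 h = comul_left (comul h)"

definition leg12 :: "('i \<times> 'i \<Rightarrow>\<^sub>0 'k) \<Rightarrow> ('i \<times> 'i \<times> 'i \<Rightarrow>\<^sub>0 'k)" where
  "leg12 t = lext (\<lambda>(a, b). tens3 (bvec a) (bvec b) one) t"

definition leg13 :: "('i \<times> 'i \<Rightarrow>\<^sub>0 'k) \<Rightarrow> ('i \<times> 'i \<times> 'i \<Rightarrow>\<^sub>0 'k)" where
  "leg13 t = lext (\<lambda>(a, b). tens3 (bvec a) one (bvec b)) t"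

definition leg23 :: "('i \<times> 'i \<Rightarrow>\<^sub>0 'k) \<Rightarrow> ('i \<times> 'i \<times> 'i \<Rightarrow>\<^sub>0 'k)" where
  "leg23 t = lext (\<lambda>(a, b). tens3 one (bvec a) (bvec b)) t"

definition hopf_algebra :: bool where
  "hopf_algebra \<longleftrightarrow>
     (\<forall>x y z. mul (mul x y) z = mul x (mul y z)) \<and>
     (\<forall>x. mul one x = x \<and> mul x one = x) \<and>
     (\<forall>x. comul_left (comul x) = comul_right (comul x)) \<and>
     (\<forall>x. lext (\<lambda>(a, b). smult (hcounit A a) (bvec b)) (comul x) = x) \<and>
     (\<forall>x. lext (\<lambda>(a, b). smult (hcounit A b) (bvec a)) (comul x) = x) \<and>
     (\<forall>x y. comul (mul x y) = mul2 (comul x) (comul y)) \<and>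
     comul one = one2 \<and>
     (\<forall>x y. counit (mul x y) = counit x * counit y) \<and>
     counit one = 1 \<and>
     (\<forall>x. lext (\<lambda>(a, b). mul (antipode (bvec a)) (bvec b)) (comul x) = smult (counit x) one) \<and>
     (\<forall>x. lext (\<lambda>(a, b). mul (bvec a) (antipode (bvec b))) (comul x) = smult (counit x) one) \<and>
     bij antipode"

(* Centre Z(H) and the subspace H \<otimes> Z(H) of H \<otimes> H (spanned by the elementary
  tensors h \<otimes> z with z central; scalars are absorbed into h). *)
definition central :: "('i \<Rightarrow>\<^sub>0 'k) \<Rightarrow> bool" where
  "central z \<longleftrightarrow> (\<forall>x. mul z x = mul x z)"

inductive_set H_tensor_center :: "('i \<times> 'i \<Rightarrow>\<^sub>0 'k) set" where
  zero: "0 \<in> H_tensor_center"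
| add: "t \<in> H_tensor_center \<Longrightarrow> central z \<Longrightarrow> t + tens h z \<in> H_tensor_center"

(* 
  \<nu>(h) = R\<^sup>(\<^sup>2\<^sup>) h\<^sub>2 R'\<^sup>(\<^sup>2\<^sup>) \<otimes> S(h\<^sub>1) S(R\<^sup>(\<^sup>1\<^sup>)) h\<^sub>3 R'\<^sup>(\<^sup>1\<^sup>)   (condition (5)) and
  the right-hand side of condition (6):
  R\<^sup>(\<^sup>1\<^sup>) h\<^sub>2 R'\<^sup>(\<^sup>1\<^sup>) \<otimes> S(R'\<^sup>(\<^sup>2\<^sup>)) S(h\<^sub>1) R\<^sup>(\<^sup>2\<^sup>) h\<^sub>3 .
  Here R = \<Sum> R\<^sub>(\<^sub>a\<^sub>,\<^sub>b\<^sub>) a \<otimes> b over basis pairs (a,b), R' a second copy (a',b'). *)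
definition nu :: "('i \<times> 'i \<Rightarrow>\<^sub>0 'k) \<Rightarrow> ('i \<Rightarrow>\<^sub>0 'k) \<Rightarrow> ('i \<times> 'i \<Rightarrow>\<^sub>0 'k)" where
  "nu R h = lext (\<lambda>(a, b). lext (\<lambda>(a', b'). lext (\<lambda>(c1, c2, c3).
      tens (mul (mul (bvec b) (bvec c2)) (bvec b'))
           (mul (mul (mul (antipode (bvec c1)) (antipode (bvec a))) (bvec c3)) (bvec a')))
    (comul3 h)) R) R"

definition nu6 :: "('i \<times> 'i \<Rightarrow>\<^sub>0 'k) \<Rightarrow> ('i \<Rightarrow>\<^sub>0 'k) \<Rightarrow> ('i \<times> 'i \<Rightarrow>\<^sub>0 'k)" where
  "nu6 R h = lext (\<lambda>(a, b). lext (\<lambda>(a', b'). lext (\<lambda>(c1, c2, c3).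
      tens (mul (mul (bvec a) (bvec c2)) (bvec a'))
           (mul (mul (mul (antipode (bvec b')) (antipode (bvec c1))) (bvec b)) (bvec c3)))
    (comul3 h)) R) R"

definition invertible2 :: "('i \<times> 'i \<Rightarrow>\<^sub>0 'k) \<Rightarrow> bool" where
  "invertible2 R \<longleftrightarrow> (\<exists>R'. mul2 R R' = one2 \<and> mul2 R' R = one2)"

definition semiquasitriangular :: "('i \<times> 'i \<Rightarrow>\<^sub>0 'k) \<Rightarrow> bool" where
  "semiquasitriangular R \<longleftrightarrow>
     hopf_algebra \<and> invertible2 R \<and>
     comul_left R = mul3 (leg13 R) (leg23 R) \<and>
     comul_right R = mul3 (leg13 R) (leg12 R) \<and>
     mul3 (comulop_right R) (leg23 R) = mul3 (leg23 R) (comul_right R) \<and>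
     mul3 (comulop_left R) (leg12 R) = mul3 (leg12 R) (comul_left R) \<and>
     (\<forall>h. nu R h \<in> H_tensor_center) \<and>
     (\<forall>h. nu R h = nu6 R h)"

end

end

theory Submission
  imports Defs
begin

section \<open>Linear algebra on finitely supported functions\<close>

lemma lookup_smult[simp]: "Poly_Mapping.lookup (smult c v) a = c * Poly_Mapping.lookup v a"
  unfolding smult_def by (simp add: Poly_Mapping.map.rep_eq when_def)

lemma lookup_bvec: "Poly_Mapping.lookup (bvec a) b = (if a = b then 1 else 0)"
  unfolding bvec_def by (simp add: lookup_single when_def)

lemma smult_add_r: "smult c (u + v) = smult c u + smult c v"
  by (rule poly_mapping_eqI) (simp add: lookup_add distrib_left)

lemma smult_add_l: "smult (c + d) u = smult c u + smult d u"
  by (rule poly_mapping_eqI) (simp add: lookup_add distrib_right)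

lemma smult_zero_r[simp]: "smult c 0 = 0"
  by (rule poly_mapping_eqI) simp

lemma smult_zero_l[simp]: "smult 0 u = (0::'a \<Rightarrow>\<^sub>0 'k::semiring_0)"
  by (rule poly_mapping_eqI) simp

lemma smult_one[simp]: "smult 1 u = (u::'a \<Rightarrow>\<^sub>0 'k::semiring_1)"
  by (rule poly_mapping_eqI) simp

lemma smult_smult[simp]: "smult c (smult d u) = smult (c * d) (u::'a \<Rightarrow>\<^sub>0 'k::semiring_0)"
  by (rule poly_mapping_eqI) (simp add: mult.assoc)

lemma smult_sum: "smult c (sum f A) = (\<Sum>a\<in>A. smult c (f a))"
  by (rule poly_mapping_eqI) (simp add: lookup_sum sum_distrib_left)

lemma sum_smult_l: "smult (sum g A) u = (\<Sum>a\<in>A. smult (g a) u)"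
  by (rule poly_mapping_eqI) (simp add: lookup_sum sum_distrib_right)

lemma lookup_lext: "Poly_Mapping.lookup (lext f v) b = (\<Sum>a\<in>Poly_Mapping.keys v. Poly_Mapping.lookup v a * Poly_Mapping.lookup (f a) b)"
  unfolding lext_def by (simp add: lookup_sum)

lemma lext_superset:
  assumes "finite S" "Poly_Mapping.keys v \<subseteq> S"
  shows "lext f v = (\<Sum>a\<in>S. smult (Poly_Mapping.lookup v a) (f a))"
proof -
  have "(\<Sum>a\<in>S. smult (Poly_Mapping.lookup v a) (f a)) = (\<Sum>a\<in>Poly_Mapping.keys v. smult (Poly_Mapping.lookup v a) (f a))"
    by (rule sum.mono_neutral_right[OF assms(1) assms(2)]) (auto simp: in_keys_iff)
  then show ?thesis by (simp add: lext_def)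
qed

lemma lext_add: "lext f (u + v) = lext f u + lext f v"
proof -
  let ?S = "Poly_Mapping.keys u \<union> Poly_Mapping.keys v"
  have f: "finite ?S" by simp
  have "lext f (u + v) = (\<Sum>a\<in>?S. smult (Poly_Mapping.lookup (u+v) a) (f a))"
    by (rule lext_superset[OF f]) (rule keys_add)
  also have "\<dots> = (\<Sum>a\<in>?S. smult (Poly_Mapping.lookup u a) (f a)) + (\<Sum>a\<in>?S. smult (Poly_Mapping.lookup v a) (f a))"
    by (simp add: lookup_add smult_add_l sum.distrib)
  also have "\<dots> = lext f u + lext f v"
    using lext_superset[OF f, of u f] lext_superset[OF f, of v f] by simp
  finally show ?thesis .
qed

lemma lext_smult: "lext f (smult c v) = smult c (lext f (v::'a \<Rightarrow>\<^sub>0 'k::field))"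
proof -
  have "lext f (smult c v) = (\<Sum>a\<in>Poly_Mapping.keys v. smult (Poly_Mapping.lookup (smult c v) a) (f a))"
    by (rule lext_superset) (auto simp: in_keys_iff)
  then show ?thesis by (simp add: lext_def smult_sum)
qed

lemma lext_zero[simp]: "lext f 0 = 0"
  by (simp add: lext_def)

lemma lext_bvec[simp]: "lext f (bvec a) = (f a :: 'b \<Rightarrow>\<^sub>0 'k::field)"
  by (simp add: lext_def bvec_def)

lemma lext_sum: "lext f (sum g A) = (\<Sum>i\<in>A. lext f (g i :: 'a \<Rightarrow>\<^sub>0 'k::field))"
  by (induction A rule: infinite_finite_induct) (auto simp: lext_add)

lemma lext_fun_add: "lext (\<lambda>a. f a + g a) v = lext f v + lext g v"
  by (simp add: lext_def smult_add_r sum.distrib)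

lemma lext_fun_smult: "lext (\<lambda>a. smult c (f a)) v = smult c (lext f (v::'a \<Rightarrow>\<^sub>0 'k::field))"
  by (simp add: lext_def smult_sum mult.commute)

lemma lext_fun_zero[simp]: "lext (\<lambda>a. 0) v = 0"
  by (simp add: lext_def)

lemma lext_cong: "(\<And>a. a \<in> Poly_Mapping.keys v \<Longrightarrow> f a = g a) \<Longrightarrow> lext f v = lext g v"
  by (simp add: lext_def)

lemma lext_bvec_id[simp]: "lext bvec v = (v::'a \<Rightarrow>\<^sub>0 'k::field)"
proof (rule poly_mapping_eqI)
  fix b
  have "Poly_Mapping.lookup (lext bvec v) b = (\<Sum>a\<in>Poly_Mapping.keys v. (if a = b then Poly_Mapping.lookup v a else 0))"
    unfolding lookup_lext lookup_bvec by (rule sum.cong) auto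
  also have "\<dots> = Poly_Mapping.lookup v b"
    by (simp add: sum.delta' in_keys_iff)
  finally show "Poly_Mapping.lookup (lext bvec v) b = Poly_Mapping.lookup v b" .
qed

definition lin :: "(('a \<Rightarrow>\<^sub>0 'k::field) \<Rightarrow> ('b \<Rightarrow>\<^sub>0 'k)) \<Rightarrow> bool" where
  "lin L \<longleftrightarrow> (\<forall>u v. L (u + v) = L u + L v) \<and> (\<forall>c u. L (smult c u) = smult c (L u))"

lemma lin_zero: "lin L \<Longrightarrow> L 0 = 0"
proof -
  assume "lin L"
  then have "L (0 + 0) = L 0 + L 0" unfolding lin_def by blast
  then show "L 0 = 0" by simp
qed

lemma lin_addD: "lin L \<Longrightarrow> L (u + v) = L u + L v"
  unfolding lin_def by blast

lemma lin_smultD: "lin L \<Longrightarrow> L (smult c u) = smult c (L u)"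
  unfolding lin_def by blast

lemma lin_sum: "lin L \<Longrightarrow> L (sum g A) = (\<Sum>i\<in>A. L (g i))"
  by (induction A rule: infinite_finite_induct) (simp_all add: lin_zero lin_addD)

lemma lin_lext: "lin L \<Longrightarrow> L (lext f v) = lext (\<lambda>a. L (f a)) v"
  unfolding lext_def by (simp add: lin_sum lin_smultD)

lemma lin_expand: "lin L \<Longrightarrow> L v = lext (\<lambda>a. L (bvec a)) v"
  using lin_lext[of L bvec v] by simp

lemma lin_eq: "lin L1 \<Longrightarrow> lin L2 \<Longrightarrow> (\<And>a. L1 (bvec a) = L2 (bvec a)) \<Longrightarrow> L1 v = L2 v"
proof -
  assume a: "lin L1" "lin L2" "\<And>a. L1 (bvec a) = L2 (bvec a)"
  have "L1 v = lext (\<lambda>a. L1 (bvec a)) v" by (rule lin_expand[OF a(1)])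
  also have "\<dots> = lext (\<lambda>a. L2 (bvec a)) v" by (simp add: a(3))
  also have "\<dots> = L2 v" by (rule lin_expand[OF a(2), symmetric])
  finally show ?thesis .
qed

lemma lin_id: "lin (\<lambda>x. x)"
  by (simp add: lin_def)

lemma lin_lext_comp: "lin L \<Longrightarrow> lin (\<lambda>x. lext f (L x))"
  by (simp add: lin_def lext_add lext_smult)

lemma lin_lext_fun: "(\<And>a. lin (F a)) \<Longrightarrow> lin L \<Longrightarrow> lin (\<lambda>x. lext (\<lambda>a. F a (L x)) v)"
  by (simp add: lin_def lext_fun_add lext_fun_smult)

lemma lin_bext1: "lin L \<Longrightarrow> lin (\<lambda>x. bext f (L x) v)"
  unfolding bext_def by (rule lin_lext_comp)

lemma lin_bext2: "lin L \<Longrightarrow> lin (\<lambda>x. bext f u (L x))"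
  unfolding bext_def by (intro lin_lext_fun lin_lext_comp lin_id)

lemma lin_add: "lin L1 \<Longrightarrow> lin L2 \<Longrightarrow> lin (\<lambda>x. L1 x + L2 x)"
  by (simp add: lin_def smult_add_r algebra_simps)

lemma lin_smult: "lin L \<Longrightarrow> lin (\<lambda>x. smult c (L x))"
  by (simp add: lin_def smult_add_r mult.commute)

lemma lext_swap: "lext (\<lambda>a. lext (\<lambda>b. F a b) w) v = lext (\<lambda>b. lext (\<lambda>a. F a b) v) (w::'b \<Rightarrow>\<^sub>0 'k::field)"
proof -
  have "lin (\<lambda>v. lext (\<lambda>a. lext (\<lambda>b. F a b) w) v)" by (intro lin_lext_comp lin_id)
  moreover have "lin (\<lambda>v. lext (\<lambda>b. lext (\<lambda>a. F a b) v) w)"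
    by (intro lin_lext_fun lin_lext_comp lin_id)
  ultimately show ?thesis by (rule lin_eq) simp
qed

lemma lext_compose: "lext g (lext f v) = lext (\<lambda>a. lext g (f a)) (v::'a \<Rightarrow>\<^sub>0 'k::field)"
  using lin_lext[of "lext g" f v] lin_lext_comp[OF lin_id] by blast

lemma bext_bvec[simp]: "bext f (bvec a) (bvec b) = (f a b :: _ \<Rightarrow>\<^sub>0 'k::field)"
  by (simp add: bext_def)

lemma tens_bvec[simp]: "tens (bvec a) (bvec b) = (bvec (a, b) :: _ \<Rightarrow>\<^sub>0 'k::field)"
  by (simp add: tens_def)


lemma lin_eq2:
  assumes "\<And>y. lin (\<lambda>x. F x y)" "\<And>y. lin (\<lambda>x. G x y)"
    "\<And>x. lin (\<lambda>y. F x y)" "\<And>x. lin (\<lambda>y. G x y)"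
    "\<And>a b. F (bvec a) (bvec b) = G (bvec a) (bvec b)"
  shows "F x y = G x y"
proof -
  have h: "F (bvec a) y = G (bvec a) y" for a
    by (rule lin_eq[of "\<lambda>y. F (bvec a) y" "\<lambda>y. G (bvec a) y"]) (use assms in auto)
  show ?thesis by (rule lin_eq[of "\<lambda>x. F x y" "\<lambda>x. G x y"]) (use assms h in auto)
qed

lemma lin_eq3:
  assumes "\<And>y z. lin (\<lambda>x. F x y z)" "\<And>y z. lin (\<lambda>x. G x y z)"
    "\<And>x z. lin (\<lambda>y. F x y z)" "\<And>x z. lin (\<lambda>y. G x y z)"
    "\<And>x y. lin (\<lambda>z. F x y z)" "\<And>x y. lin (\<lambda>z. G x y z)"
    "\<And>a b c. F (bvec a) (bvec b) (bvec c) = G (bvec a) (bvec b) (bvec c)"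
  shows "F x y z = G x y z"
proof -
  have h: "F (bvec a) y z = G (bvec a) y z" for a
    by (rule lin_eq2[of "\<lambda>y z. F (bvec a) y z" "\<lambda>y z. G (bvec a) y z"]) (use assms in auto)
  show ?thesis by (rule lin_eq[of "\<lambda>x. F x y z" "\<lambda>x. G x y z"]) (use assms h in auto)
qed

lemma lin_eq4:
  assumes "\<And>y z w. lin (\<lambda>x. F x y z w)" "\<And>y z w. lin (\<lambda>x. G x y z w)"
    "\<And>x z w. lin (\<lambda>y. F x y z w)" "\<And>x z w. lin (\<lambda>y. G x y z w)"
    "\<And>x y w. lin (\<lambda>z. F x y z w)" "\<And>x y w. lin (\<lambda>z. G x y z w)"
    "\<And>x y z. lin (\<lambda>w. F x y z w)" "\<And>x y z. lin (\<lambda>w. G x y z w)"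
    "\<And>a b c d. F (bvec a) (bvec b) (bvec c) (bvec d) = G (bvec a) (bvec b) (bvec c) (bvec d)"
  shows "F x y z w = G x y z w"
proof -
  have h: "F (bvec a) y z w = G (bvec a) y z w" for a
    by (rule lin_eq3[of "\<lambda>y z w. F (bvec a) y z w" "\<lambda>y z w. G (bvec a) y z w"]) (use assms in auto)
  show ?thesis by (rule lin_eq[of "\<lambda>x. F x y z w" "\<lambda>x. G x y z w"]) (use assms h in auto)
qed

lemma lin_tens1: "lin L \<Longrightarrow> lin (\<lambda>x. tens (L x) v)"
  unfolding tens_def by (rule lin_bext1)
lemma lin_tens2: "lin L \<Longrightarrow> lin (\<lambda>x. tens u (L x))"
  unfolding tens_def by (rule lin_bext2)
lemma lin_tens3_1: "lin L \<Longrightarrow> lin (\<lambda>x. tens3 (L x) v w)"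
  unfolding tens3_def by (rule lin_tens1)
lemma lin_tens3_2: "lin L \<Longrightarrow> lin (\<lambda>x. tens3 u (L x) w)"
  unfolding tens3_def by (intro lin_tens1 lin_tens2)
lemma lin_tens3_3: "lin L \<Longrightarrow> lin (\<lambda>x. tens3 u v (L x))"
  unfolding tens3_def by (intro lin_tens1 lin_tens2)
lemma lin_flip: "lin L \<Longrightarrow> lin (\<lambda>x. flip (L x))"
  unfolding flip_def by (rule lin_lext_comp)

lemmas lin_intros = lin_id lin_lext_comp lin_bext1 lin_bext2 lin_add lin_smult
  lin_tens1 lin_tens2 lin_tens3_1 lin_tens3_2 lin_tens3_3 lin_flip

lemma tens3_bvec[simp]: "tens3 (bvec a) (bvec b) (bvec c) = (bvec (a, b, c) :: _ \<Rightarrow>\<^sub>0 'k::field)"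
  by (simp add: tens3_def)

lemma flip_tens[simp]: "flip (tens u v) = tens v (u :: _ \<Rightarrow>\<^sub>0 'k::field)" (is "?L u v = ?R u v")
  by (rule lin_eq2[of ?L ?R]) (intro lin_intros | simp add: flip_def split_beta)+

lemma flip_flip[simp]: "flip (flip X) = (X :: _ \<Rightarrow>\<^sub>0 'k::field)"
  by (rule lin_eq[of "\<lambda>X. flip (flip X)" "\<lambda>X. X"]) (intro lin_intros | simp add: flip_def split_beta)+


context
  fixes A :: "('i, 'k::field) hopf_data"
begin

definition one3 :: "'i \<times> 'i \<times> 'i \<Rightarrow>\<^sub>0 'k" where
  "one3 = tens3 (one A) (one A) (one A)"
definition SL :: "('i \<times> 'i \<Rightarrow>\<^sub>0 'k) \<Rightarrow> ('i \<times> 'i \<Rightarrow>\<^sub>0 'k)" where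
  "SL X = lext (\<lambda>(a, b). tens (antipode A (bvec a)) (bvec b)) X"
definition SR :: "('i \<times> 'i \<Rightarrow>\<^sub>0 'k) \<Rightarrow> ('i \<times> 'i \<Rightarrow>\<^sub>0 'k)" where
  "SR X = lext (\<lambda>(a, b). tens (bvec a) (antipode A (bvec b))) X"
definition epsL :: "('i \<times> 'i \<Rightarrow>\<^sub>0 'k) \<Rightarrow> ('i \<Rightarrow>\<^sub>0 'k)" where
  "epsL X = lext (\<lambda>(a, b). smult (hcounit A a) (bvec b)) X"
definition epsR :: "('i \<times> 'i \<Rightarrow>\<^sub>0 'k) \<Rightarrow> ('i \<Rightarrow>\<^sub>0 'k)" where
  "epsR X = lext (\<lambda>(a, b). smult (hcounit A b) (bvec a)) X"
definition phiA :: "('i \<times> 'i \<times> 'i \<Rightarrow>\<^sub>0 'k) \<Rightarrow> ('i \<times> 'i \<Rightarrow>\<^sub>0 'k)" where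
  "phiA X = lext (\<lambda>(a, b, c). tens (mul A (antipode A (bvec a)) (bvec b)) (bvec c)) X"
definition phiB :: "('i \<times> 'i \<times> 'i \<Rightarrow>\<^sub>0 'k) \<Rightarrow> ('i \<times> 'i \<Rightarrow>\<^sub>0 'k)" where
  "phiB X = lext (\<lambda>(a, b, c). tens (bvec a) (mul A (bvec b) (antipode A (bvec c)))) X"
definition psiA :: "('i \<times> 'i \<times> 'i \<Rightarrow>\<^sub>0 'k) \<Rightarrow> ('i \<times> 'i \<Rightarrow>\<^sub>0 'k)" where
  "psiA X = lext (\<lambda>(a, b, c). smult (hcounit A a) (tens (bvec b) (bvec c))) X"
definition psiB :: "('i \<times> 'i \<times> 'i \<Rightarrow>\<^sub>0 'k) \<Rightarrow> ('i \<times> 'i \<Rightarrow>\<^sub>0 'k)" where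
  "psiB X = lext (\<lambda>(a, b, c). smult (hcounit A b) (tens (bvec a) (bvec c))) X"
definition act :: "('i \<times> 'i \<Rightarrow>\<^sub>0 'k) \<Rightarrow> ('i \<times> 'i \<Rightarrow>\<^sub>0 'k) \<Rightarrow> ('i \<times> 'i \<Rightarrow>\<^sub>0 'k)" where
  "act = bext (\<lambda>(a, b) (c, d). tens (hmul A a c) (hmul A d b))"
definition BB :: "('i \<times> 'i \<Rightarrow>\<^sub>0 'k) \<Rightarrow> ('i \<times> 'i \<Rightarrow>\<^sub>0 'k) \<Rightarrow> ('i \<times> 'i \<Rightarrow>\<^sub>0 'k)" where
  "BB = bext (\<lambda>(a, b) (c, d). tens (mul A (antipode A (bvec c)) (bvec a)) (hmul A b d))"
definition Mh :: "('i \<Rightarrow>\<^sub>0 'k) \<Rightarrow> ('i \<times> 'i \<Rightarrow>\<^sub>0 'k) \<Rightarrow> ('i \<times> 'i \<Rightarrow>\<^sub>0 'k)" where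
  "Mh h X = lext (\<lambda>(a, b). lext (\<lambda>(c1, c2, c3). tens (hmul A a c2)
       (mul A (mul A (antipode A (bvec c1)) (bvec b)) (bvec c3))) (comul3 A h)) X"

end

definition sigA :: "('i \<times> 'i \<times> 'i \<Rightarrow>\<^sub>0 'k::field) \<Rightarrow> ('i \<times> 'i \<times> 'i \<Rightarrow>\<^sub>0 'k)" where
  "sigA X = lext (\<lambda>(a, b, c). bvec (b, c, a)) X"
definition sigB :: "('i \<times> 'i \<times> 'i \<Rightarrow>\<^sub>0 'k::field) \<Rightarrow> ('i \<times> 'i \<times> 'i \<Rightarrow>\<^sub>0 'k)" where
  "sigB X = lext (\<lambda>(a, b, c). bvec (c, a, b)) X"
definition rev3 :: "('i \<times> 'i \<times> 'i \<Rightarrow>\<^sub>0 'k::field) \<Rightarrow> ('i \<times> 'i \<times> 'i \<Rightarrow>\<^sub>0 'k)" where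
  "rev3 X = lext (\<lambda>(a, b, c). bvec (c, b, a)) X"
definition sw23 :: "('i \<times> 'i \<times> 'i \<Rightarrow>\<^sub>0 'k::field) \<Rightarrow> ('i \<times> 'i \<times> 'i \<Rightarrow>\<^sub>0 'k)" where
  "sw23 X = lext (\<lambda>(a, b, c). bvec (a, c, b)) X"
definition sw12 :: "('i \<times> 'i \<times> 'i \<Rightarrow>\<^sub>0 'k::field) \<Rightarrow> ('i \<times> 'i \<times> 'i \<Rightarrow>\<^sub>0 'k)" where
  "sw12 X = lext (\<lambda>(a, b, c). bvec (b, a, c)) X"

context
  fixes A :: "('i, 'k::field) hopf_data"
begin

lemma lin_mul1: "lin L \<Longrightarrow> lin (\<lambda>x. mul A (L x) v)" unfolding mul_def by (rule lin_bext1)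
lemma lin_mul2: "lin L \<Longrightarrow> lin (\<lambda>x. mul A u (L x))" unfolding mul_def by (rule lin_bext2)
lemma lin_mul2_1: "lin L \<Longrightarrow> lin (\<lambda>x. mul2 A (L x) v)" unfolding mul2_def by (rule lin_bext1)
lemma lin_mul2_2: "lin L \<Longrightarrow> lin (\<lambda>x. mul2 A u (L x))" unfolding mul2_def by (rule lin_bext2)
lemma lin_mul3_1: "lin L \<Longrightarrow> lin (\<lambda>x. mul3 A (L x) v)" unfolding mul3_def by (rule lin_bext1)
lemma lin_mul3_2: "lin L \<Longrightarrow> lin (\<lambda>x. mul3 A u (L x))" unfolding mul3_def by (rule lin_bext2)
lemma lin_act1: "lin L \<Longrightarrow> lin (\<lambda>x. act A (L x) v)" unfolding act_def by (rule lin_bext1)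
lemma lin_act2: "lin L \<Longrightarrow> lin (\<lambda>x. act A u (L x))" unfolding act_def by (rule lin_bext2)
lemma lin_BB1: "lin L \<Longrightarrow> lin (\<lambda>x. BB A (L x) v)" unfolding BB_def by (rule lin_bext1)
lemma lin_BB2: "lin L \<Longrightarrow> lin (\<lambda>x. BB A u (L x))" unfolding BB_def by (rule lin_bext2)
lemma lin_comul: "lin L \<Longrightarrow> lin (\<lambda>x. comul A (L x))" unfolding comul_def by (rule lin_lext_comp)
lemma lin_antipode: "lin L \<Longrightarrow> lin (\<lambda>x. antipode A (L x))" unfolding antipode_def by (rule lin_lext_comp)
lemma lin_comul_left: "lin L \<Longrightarrow> lin (\<lambda>x. comul_left A (L x))" unfolding comul_left_def by (rule lin_lext_comp)
lemma lin_comul_right: "lin L \<Longrightarrow> lin (\<lambda>x. comul_right A (L x))" unfolding comul_right_def by (rule lin_lext_comp)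
lemma lin_comulop_left: "lin L \<Longrightarrow> lin (\<lambda>x. comulop_left A (L x))" unfolding comulop_left_def by (rule lin_lext_comp)
lemma lin_comulop_right: "lin L \<Longrightarrow> lin (\<lambda>x. comulop_right A (L x))" unfolding comulop_right_def by (rule lin_lext_comp)
lemma lin_leg12: "lin L \<Longrightarrow> lin (\<lambda>x. leg12 A (L x))" unfolding leg12_def by (rule lin_lext_comp)
lemma lin_leg13: "lin L \<Longrightarrow> lin (\<lambda>x. leg13 A (L x))" unfolding leg13_def by (rule lin_lext_comp)
lemma lin_leg23: "lin L \<Longrightarrow> lin (\<lambda>x. leg23 A (L x))" unfolding leg23_def by (rule lin_lext_comp)
lemma lin_SL: "lin L \<Longrightarrow> lin (\<lambda>x. SL A (L x))" unfolding SL_def by (rule lin_lext_comp)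
lemma lin_SR: "lin L \<Longrightarrow> lin (\<lambda>x. SR A (L x))" unfolding SR_def by (rule lin_lext_comp)
lemma lin_epsL: "lin L \<Longrightarrow> lin (\<lambda>x. epsL A (L x))" unfolding epsL_def by (rule lin_lext_comp)
lemma lin_epsR: "lin L \<Longrightarrow> lin (\<lambda>x. epsR A (L x))" unfolding epsR_def by (rule lin_lext_comp)
lemma lin_phiA: "lin L \<Longrightarrow> lin (\<lambda>x. phiA A (L x))" unfolding phiA_def by (rule lin_lext_comp)
lemma lin_phiB: "lin L \<Longrightarrow> lin (\<lambda>x. phiB A (L x))" unfolding phiB_def by (rule lin_lext_comp)
lemma lin_psiA: "lin L \<Longrightarrow> lin (\<lambda>x. psiA A (L x))" unfolding psiA_def by (rule lin_lext_comp)
lemma lin_psiB: "lin L \<Longrightarrow> lin (\<lambda>x. psiB A (L x))" unfolding psiB_def by (rule lin_lext_comp)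
lemma lin_Mh: "lin L \<Longrightarrow> lin (\<lambda>x. Mh A h (L x))" unfolding Mh_def by (rule lin_lext_comp)
lemma lin_sigA: "lin L \<Longrightarrow> lin (\<lambda>x. sigA (L x))" unfolding sigA_def by (rule lin_lext_comp)
lemma lin_sigB: "lin L \<Longrightarrow> lin (\<lambda>x. sigB (L x))" unfolding sigB_def by (rule lin_lext_comp)
lemma lin_rev3: "lin L \<Longrightarrow> lin (\<lambda>x. rev3 (L x))" unfolding rev3_def by (rule lin_lext_comp)
lemma lin_sw23: "lin L \<Longrightarrow> lin (\<lambda>x. sw23 (L x))" unfolding sw23_def by (rule lin_lext_comp)
lemma lin_sw12: "lin L \<Longrightarrow> lin (\<lambda>x. sw12 (L x))" unfolding sw12_def by (rule lin_lext_comp)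

lemmas lin_intros2 = lin_intros lin_mul1 lin_mul2 lin_mul2_1 lin_mul2_2 lin_mul3_1 lin_mul3_2
  lin_act1 lin_act2 lin_BB1 lin_BB2 lin_comul lin_antipode lin_comul_left lin_comul_right
  lin_comulop_left lin_comulop_right lin_leg12 lin_leg13 lin_leg23 lin_SL lin_SR lin_epsL lin_epsR
  lin_phiA lin_phiB lin_psiA lin_psiB lin_Mh lin_sigA lin_sigB lin_rev3 lin_sw23 lin_sw12

lemma mul_bvec[simp]: "mul A (bvec a) (bvec b) = hmul A a b"
  by (simp add: mul_def)

lemma mul2_tens: "mul2 A (tens a b) (tens c d) = tens (mul A a c) (mul A b d)"
  (is "?L a b c d = ?R a b c d")
  by (rule lin_eq4[of ?L ?R]) (intro lin_intros2 | simp add: mul2_def split_beta)+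

lemma act_tens: "act A (tens a b) (tens c d) = tens (mul A a c) (mul A d b)"
  (is "?L a b c d = ?R a b c d")
  by (rule lin_eq4[of ?L ?R]) (intro lin_intros2 | simp add: act_def split_beta)+

lemma BB_tens: "BB A (tens a b) (tens c d) = tens (mul A (antipode A c) a) (mul A b d)"
  (is "?L a b c d = ?R a b c d")
  by (rule lin_eq4[of ?L ?R]) (intro lin_intros2 | simp add: BB_def antipode_def split_beta)+

lemma mul3_tens3_bvec: "mul3 A (tens3 a b c) (bvec (d, e, f)) = tens3 (mul A a (bvec d)) (mul A b (bvec e)) (mul A c (bvec f))"
  (is "?L a b c = ?R a b c")
  by (rule lin_eq3[of ?L ?R]) (intro lin_intros2 | simp add: mul3_def split_beta)+

lemma mul3_tens3: "mul3 A (tens3 a b c) (tens3 d e f) = tens3 (mul A a d) (mul A b e) (mul A c f)"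
  (is "?L d e f = ?R d e f")
  by (rule lin_eq3[of ?L ?R]) (intro lin_intros2 | simp add: mul3_tens3_bvec)+

lemma leg12_tens: "leg12 A (tens a b) = tens3 a b (one A)" (is "?L a b = ?R a b")
  by (rule lin_eq2[of ?L ?R]) (intro lin_intros2 | simp add: leg12_def split_beta)+
lemma leg13_tens: "leg13 A (tens a b) = tens3 a (one A) b" (is "?L a b = ?R a b")
  by (rule lin_eq2[of ?L ?R]) (intro lin_intros2 | simp add: leg13_def split_beta)+
lemma leg23_tens: "leg23 A (tens a b) = tens3 (one A) a b" (is "?L a b = ?R a b")
  by (rule lin_eq2[of ?L ?R]) (intro lin_intros2 | simp add: leg23_def split_beta)+

lemma SL_tens: "SL A (tens a b) = tens (antipode A a) b" (is "?L a b = ?R a b")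
  by (rule lin_eq2[of ?L ?R]) (intro lin_intros2 | simp add: SL_def antipode_def split_beta)+
lemma SR_tens: "SR A (tens a b) = tens a (antipode A b)" (is "?L a b = ?R a b")
  by (rule lin_eq2[of ?L ?R]) (intro lin_intros2 | simp add: SR_def antipode_def split_beta)+

lemma sigA_tens3: "sigA (tens3 a b c) = tens3 b c a" (is "?L a b c = ?R a b c")
  by (rule lin_eq3[of ?L ?R]) (intro lin_intros2 | simp add: sigA_def split_beta)+
lemma sigB_tens3: "sigB (tens3 a b c) = tens3 c a b" (is "?L a b c = ?R a b c")
  by (rule lin_eq3[of ?L ?R]) (intro lin_intros2 | simp add: sigB_def split_beta)+
lemma rev3_tens3: "rev3 (tens3 a b c) = tens3 c b a" (is "?L a b c = ?R a b c")
  by (rule lin_eq3[of ?L ?R]) (intro lin_intros2 | simp add: rev3_def split_beta)+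
lemma sw23_tens3: "sw23 (tens3 a b c) = tens3 a c b" (is "?L a b c = ?R a b c")
  by (rule lin_eq3[of ?L ?R]) (intro lin_intros2 | simp add: sw23_def split_beta)+
lemma sw12_tens3: "sw12 (tens3 a b c) = tens3 b a c" (is "?L a b c = ?R a b c")
  by (rule lin_eq3[of ?L ?R]) (intro lin_intros2 | simp add: sw12_def split_beta)+

end


lemma cp_eta: "case_prod f = (\<lambda>p. f (fst p) (snd p))"
  by (simp add: fun_eq_iff split_beta)

lemma bvec_pair: "bvec p = tens (bvec (fst p)) (bvec (snd p) :: _ \<Rightarrow>\<^sub>0 'k::field)"
  by (cases p) simp

lemma bvec_triple: "bvec p = tens3 (bvec (fst p)) (bvec (fst (snd p))) (bvec (snd (snd p)) :: _ \<Rightarrow>\<^sub>0 'k::field)"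
  by (cases p) auto

lemma lfun_bvec[simp]: "lfun f (bvec a) = (f a :: 'k::field)"
  by (simp add: lfun_def bvec_def)

lemma smult_lin1: "lin L \<Longrightarrow> L (smult c u) = smult c (L u)" by (rule lin_smultD)

context
  fixes A :: "('i, 'k::field) hopf_data"
begin

lemma tens_smult1[simp]: "tens (smult (c::'k::field) u) v = smult c (tens u v)"
  using lin_smultD[OF lin_tens1[OF lin_id]] by blast
lemma tens_smult2[simp]: "tens u (smult (c::'k::field) v) = smult c (tens u v)"
  using lin_smultD[OF lin_tens2[OF lin_id]] by blast
lemma tens3_smult1[simp]: "tens3 (smult (c::'k::field) u) v w = smult c (tens3 u v w)"
  using lin_smultD[OF lin_tens3_1[OF lin_id]] by blast
lemma tens3_smult2[simp]: "tens3 u (smult (c::'k::field) v) w = smult c (tens3 u v w)"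
  using lin_smultD[OF lin_tens3_2[OF lin_id]] by blast
lemma tens3_smult3[simp]: "tens3 u v (smult (c::'k::field) w) = smult c (tens3 u v w)"
  using lin_smultD[OF lin_tens3_3[OF lin_id]] by blast
lemma mul_smult1[simp]: "mul A (smult c u) v = smult c (mul A u v)"
  using lin_smultD[OF lin_mul1[OF lin_id]] by blast
lemma mul_smult2[simp]: "mul A u (smult c v) = smult c (mul A u v)"
  using lin_smultD[OF lin_mul2[OF lin_id]] by blast
lemma mul2_smult1[simp]: "mul2 A (smult c u) v = smult c (mul2 A u v)"
  using lin_smultD[OF lin_mul2_1[OF lin_id]] by blast
lemma mul2_smult2[simp]: "mul2 A u (smult c v) = smult c (mul2 A u v)"
  using lin_smultD[OF lin_mul2_2[OF lin_id]] by blast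

lemma mul2_lext1: "mul2 A (lext f v) Y = lext (\<lambda>a. mul2 A (f a) Y) v"
  using lin_lext[OF lin_mul2_1[OF lin_id]] by blast
lemma act_lext1: "act A (lext f v) Y = lext (\<lambda>a. act A (f a) Y) v"
  using lin_lext[OF lin_act1[OF lin_id]] by blast
lemma sigA_lext: "sigA (lext f v) = lext (\<lambda>a. sigA (f a)) v"
  using lin_lext[OF lin_sigA[OF lin_id]] by blast
lemma sigB_lext: "sigB (lext f v) = lext (\<lambda>a. sigB (f a)) v"
  using lin_lext[OF lin_sigB[OF lin_id]] by blast
lemma sw23_lext: "sw23 (lext f v) = lext (\<lambda>a. sw23 (f a)) v"
  using lin_lext[OF lin_sw23[OF lin_id]] by blast
lemma sw12_lext: "sw12 (lext f v) = lext (\<lambda>a. sw12 (f a)) v"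
  using lin_lext[OF lin_sw12[OF lin_id]] by blast
lemma phiA_lext: "phiA A (lext f v) = lext (\<lambda>a. phiA A (f a)) v"
  using lin_lext[OF lin_phiA[OF lin_id]] by blast
lemma phiB_lext: "phiB A (lext f v) = lext (\<lambda>a. phiB A (f a)) v"
  using lin_lext[OF lin_phiB[OF lin_id]] by blast
lemma psiA_lext: "psiA A (lext f v) = lext (\<lambda>a. psiA A (f a)) v"
  using lin_lext[OF lin_psiA[OF lin_id]] by blast
lemma psiB_lext: "psiB A (lext f v) = lext (\<lambda>a. psiB A (f a)) v"
  using lin_lext[OF lin_psiB[OF lin_id]] by blast

lemma phiA_tens3: "phiA A (tens3 a b c) = tens (mul A (antipode A a) b) c" (is "?L a b c = ?R a b c")
  by (rule lin_eq3[of ?L ?R]) (intro lin_intros2 | simp add: phiA_def antipode_def split_beta)+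
lemma phiB_tens3: "phiB A (tens3 a b c) = tens a (mul A b (antipode A c))" (is "?L a b c = ?R a b c")
  by (rule lin_eq3[of ?L ?R]) (intro lin_intros2 | simp add: phiB_def antipode_def split_beta)+
lemma psiA_tens3: "psiA A (tens3 (bvec a) b c) = smult (hcounit A a) (tens b c)" (is "?L b c = ?R b c")
  by (rule lin_eq2[of ?L ?R]) (intro lin_intros2 | simp add: psiA_def split_beta)+
lemma psiB_tens3: "psiB A (tens3 a (bvec b) c) = smult (hcounit A b) (tens a c)" (is "?L a c = ?R a c")
  by (rule lin_eq2[of ?L ?R]) (intro lin_intros2 | simp add: psiB_def split_beta)+

end


section \<open>Hopf algebra facts\<close>

definition ext3L :: "('i \<times> 'i \<Rightarrow>\<^sub>0 'k::field) \<Rightarrow> ('i \<Rightarrow>\<^sub>0 'k) \<Rightarrow> ('i \<times> 'i \<times> 'i \<Rightarrow>\<^sub>0 'k)" where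
  "ext3L Y z = lext (\<lambda>p. tens3 (bvec (fst p)) (bvec (snd p)) z) Y"
definition ext3R :: "('i \<Rightarrow>\<^sub>0 'k::field) \<Rightarrow> ('i \<times> 'i \<Rightarrow>\<^sub>0 'k) \<Rightarrow> ('i \<times> 'i \<times> 'i \<Rightarrow>\<^sub>0 'k)" where
  "ext3R x Y = lext (\<lambda>p. tens3 x (bvec (fst p)) (bvec (snd p))) Y"

locale hopf =
  fixes A :: "('i, 'k::field) hopf_data"
  assumes hopf: "hopf_algebra A"
begin

lemma mul_assoc: "mul A (mul A x y) z = mul A x (mul A y z)"
  using hopf unfolding hopf_algebra_def by blast
lemma mul_one_l[simp]: "mul A (one A) x = x"
  using hopf unfolding hopf_algebra_def by blast
lemma mul_one_r[simp]: "mul A x (one A) = x"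
  using hopf unfolding hopf_algebra_def by blast
lemma counit_ax_l: "lext (\<lambda>(a, b). smult (hcounit A a) (bvec b)) (comul A x) = x"
  using hopf unfolding hopf_algebra_def by blast
lemma counit_ax_r: "lext (\<lambda>(a, b). smult (hcounit A b) (bvec a)) (comul A x) = x"
  using hopf unfolding hopf_algebra_def by blast
lemma comul_mul: "comul A (mul A x y) = mul2 A (comul A x) (comul A y)"
  using hopf unfolding hopf_algebra_def by blast
lemma comul_one: "comul A (one A) = one2 A"
  using hopf unfolding hopf_algebra_def by blast
lemma antipode_ax_l: "lext (\<lambda>(a, b). mul A (antipode A (bvec a)) (bvec b)) (comul A x) = smult (counit A x) (one A)"
  using hopf unfolding hopf_algebra_def by blast
lemma antipode_ax_r: "lext (\<lambda>(a, b). mul A (bvec a) (antipode A (bvec b))) (comul A x) = smult (counit A x) (one A)"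
  using hopf unfolding hopf_algebra_def by blast

lemma mul2_assoc: "mul2 A (mul2 A X Y) Z = mul2 A X (mul2 A Y Z)" (is "?L X Y Z = ?R X Y Z")
  by (rule lin_eq3[of ?L ?R]) (intro lin_intros2 | simp only: bvec_pair mul2_tens mul_assoc)+

lemma mul2_one_l[simp]: "mul2 A (one2 A) X = X"
  by (rule lin_eq[of "\<lambda>X. mul2 A (one2 A) X" "\<lambda>X. X"])
     (intro lin_intros2 | simp only: bvec_pair mul2_tens one2_def mul_one_l)+
lemma mul2_one_r[simp]: "mul2 A X (one2 A) = X"
  by (rule lin_eq[of "\<lambda>X. mul2 A X (one2 A)" "\<lambda>X. X"])
     (intro lin_intros2 | simp only: bvec_pair mul2_tens one2_def mul_one_r)+

lemma mul3_assoc: "mul3 A (mul3 A X Y) Z = mul3 A X (mul3 A Y Z)" (is "?L X Y Z = ?R X Y Z")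
  by (rule lin_eq3[of ?L ?R]) (intro lin_intros2 | simp only: bvec_triple mul3_tens3 mul_assoc)+

lemma mul3_one_l[simp]: "mul3 A (one3 A) X = X"
  by (rule lin_eq[of "\<lambda>X. mul3 A (one3 A) X" "\<lambda>X. X"])
     (intro lin_intros2 | simp only: bvec_triple mul3_tens3 one3_def mul_one_l)+
lemma mul3_one_r[simp]: "mul3 A X (one3 A) = X"
  by (rule lin_eq[of "\<lambda>X. mul3 A X (one3 A)" "\<lambda>X. X"])
     (intro lin_intros2 | simp only: bvec_triple mul3_tens3 one3_def mul_one_r)+

lemma act_assoc: "act A (act A X Y) Z = act A X (act A Y Z)" (is "?L X Y Z = ?R X Y Z")
  by (rule lin_eq3[of ?L ?R]) (intro lin_intros2 | simp only: bvec_pair act_tens mul_assoc)+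

lemma act_one_r[simp]: "act A X (one2 A) = X"
  by (rule lin_eq[of "\<lambda>X. act A X (one2 A)" "\<lambda>X. X"])
     (intro lin_intros2 | simp only: bvec_pair act_tens one2_def mul_one_r mul_one_l)+

lemma flip_mul2: "flip (mul2 A X Y) = mul2 A (flip X) (flip Y)" (is "?L X Y = ?R X Y")
  by (rule lin_eq2[of ?L ?R]) (intro lin_intros2 | simp only: bvec_pair mul2_tens flip_tens)+

lemma flip_one2[simp]: "flip (one2 A) = one2 A"
  by (simp add: one2_def)

lemma leg12_mul2: "leg12 A (mul2 A X Y) = mul3 A (leg12 A X) (leg12 A Y)" (is "?L X Y = ?R X Y")
  by (rule lin_eq2[of ?L ?R]) (intro lin_intros2 | simp only: bvec_pair mul2_tens leg12_tens mul3_tens3 mul_one_l)+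
lemma leg13_mul2: "leg13 A (mul2 A X Y) = mul3 A (leg13 A X) (leg13 A Y)" (is "?L X Y = ?R X Y")
  by (rule lin_eq2[of ?L ?R]) (intro lin_intros2 | simp only: bvec_pair mul2_tens leg13_tens mul3_tens3 mul_one_l)+
lemma leg23_mul2: "leg23 A (mul2 A X Y) = mul3 A (leg23 A X) (leg23 A Y)" (is "?L X Y = ?R X Y")
  by (rule lin_eq2[of ?L ?R]) (intro lin_intros2 | simp only: bvec_pair mul2_tens leg23_tens mul3_tens3 mul_one_l)+
lemma leg12_one[simp]: "leg12 A (one2 A) = one3 A" by (simp add: one2_def leg12_tens one3_def)
lemma leg13_one[simp]: "leg13 A (one2 A) = one3 A" by (simp add: one2_def leg13_tens one3_def)
lemma leg23_one[simp]: "leg23 A (one2 A) = one3 A" by (simp add: one2_def leg23_tens one3_def)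


lemma lin_ext3L_1: "lin L \<Longrightarrow> lin (\<lambda>x. ext3L (L x) z)" unfolding ext3L_def by (rule lin_lext_comp)
lemma lin_ext3L_2: "lin L \<Longrightarrow> lin (\<lambda>x. ext3L Y (L x))" unfolding ext3L_def
  by (rule lin_lext_fun[where F="\<lambda>p z. tens3 (bvec (fst p)) (bvec (snd p)) z"]) (intro lin_intros2)+
lemma lin_ext3R_2: "lin L \<Longrightarrow> lin (\<lambda>x. ext3R x' (L x))" unfolding ext3R_def by (rule lin_lext_comp)
lemma lin_ext3R_1: "lin L \<Longrightarrow> lin (\<lambda>x. ext3R (L x) Y)" unfolding ext3R_def
  by (rule lin_lext_fun[where F="\<lambda>p x. tens3 x (bvec (fst p)) (bvec (snd p))"]) (intro lin_intros2)+

lemmas lin_intros3 = lin_intros2 lin_ext3L_1 lin_ext3L_2 lin_ext3R_1 lin_ext3R_2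

lemma ext3L_tens: "ext3L (tens a b) z = tens3 a b z" (is "?L a b z = ?R a b z")
  by (rule lin_eq3[of ?L ?R]) (intro lin_intros3 | simp add: ext3L_def)+
lemma ext3R_tens: "ext3R x (tens a b) = tens3 x a b" (is "?L x a b = ?R x a b")
  by (rule lin_eq3[of ?L ?R]) (intro lin_intros3 | simp add: ext3R_def)+

lemma mul3_ext3L: "mul3 A (ext3L Y z) (ext3L Y' z') = ext3L (mul2 A Y Y') (mul A z z')"
  (is "?L Y z Y' z' = ?R Y z Y' z'")
  by (rule lin_eq4[of ?L ?R]) (intro lin_intros3 | simp only: bvec_pair ext3L_tens mul3_tens3 mul2_tens)+
lemma mul3_ext3R: "mul3 A (ext3R z Y) (ext3R z' Y') = ext3R (mul A z z') (mul2 A Y Y')"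
  (is "?L z Y z' Y' = ?R z Y z' Y'")
  by (rule lin_eq4[of ?L ?R]) (intro lin_intros3 | simp only: bvec_pair ext3R_tens mul3_tens3 mul2_tens)+

lemma comul_left_tens: "comul_left A (tens x y) = ext3L (comul A x) y" (is "?L x y = ?R x y")
  by (rule lin_eq2[of ?L ?R]) (intro lin_intros3 | simp add: comul_left_def ext3L_def cp_eta)+
lemma comul_right_tens: "comul_right A (tens x y) = ext3R x (comul A y)" (is "?L x y = ?R x y")
  by (rule lin_eq2[of ?L ?R]) (intro lin_intros3 | simp add: comul_right_def ext3R_def cp_eta)+

lemma comul_left_mul2: "comul_left A (mul2 A X Y) = mul3 A (comul_left A X) (comul_left A Y)" (is "?L X Y = ?R X Y")
  by (rule lin_eq2[of ?L ?R]) (intro lin_intros3 | simp only: bvec_pair mul2_tens comul_left_tens comul_mul mul3_ext3L)+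
lemma comul_right_mul2: "comul_right A (mul2 A X Y) = mul3 A (comul_right A X) (comul_right A Y)" (is "?L X Y = ?R X Y")
  by (rule lin_eq2[of ?L ?R]) (intro lin_intros3 | simp only: bvec_pair mul2_tens comul_right_tens comul_mul mul3_ext3R)+
lemma comul_left_one[simp]: "comul_left A (one2 A) = one3 A"
  by (simp add: one2_def comul_left_tens comul_one ext3L_tens one3_def)
lemma comul_right_one[simp]: "comul_right A (one2 A) = one3 A"
  by (simp add: one2_def comul_right_tens comul_one ext3R_tens one3_def)

lemma comulop_right_sw: "comulop_right A X = sw23 (comul_right A X)"
  by (rule lin_eq[of "comulop_right A" "\<lambda>X. sw23 (comul_right A X)"])
     (intro lin_intros3 | simp add: comulop_right_def comul_right_def sw23_def lext_compose cp_eta)+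
lemma comulop_left_sw: "comulop_left A X = sw12 (comul_left A X)"
  by (rule lin_eq[of "comulop_left A" "\<lambda>X. sw12 (comul_left A X)"])
     (intro lin_intros3 | simp add: comulop_left_def comul_left_def sw12_def lext_compose cp_eta)+
lemma comul_left_flip: "comul_left A (flip X) = sigA (comul_right A X)"
  by (rule lin_eq[of "\<lambda>X. comul_left A (flip X)" "\<lambda>X. sigA (comul_right A X)"])
     (intro lin_intros3 | simp add: flip_def comul_left_def comul_right_def sigA_def lext_compose cp_eta)+
lemma comul_right_flip: "comul_right A (flip X) = sigB (comul_left A X)"
  by (rule lin_eq[of "\<lambda>X. comul_right A (flip X)" "\<lambda>X. sigB (comul_left A X)"])
     (intro lin_intros3 | simp add: flip_def comul_left_def comul_right_def sigB_def lext_compose cp_eta)+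

lemma sigA_mul3: "sigA (mul3 A X Y) = mul3 A (sigA X) (sigA Y)" (is "?L X Y = ?R X Y")
  by (rule lin_eq2[of ?L ?R]) (intro lin_intros3 | simp only: bvec_triple mul3_tens3 sigA_tens3)+
lemma sigB_mul3: "sigB (mul3 A X Y) = mul3 A (sigB X) (sigB Y)" (is "?L X Y = ?R X Y")
  by (rule lin_eq2[of ?L ?R]) (intro lin_intros3 | simp only: bvec_triple mul3_tens3 sigB_tens3)+
lemma rev3_mul3: "rev3 (mul3 A X Y) = mul3 A (rev3 X) (rev3 Y)" (is "?L X Y = ?R X Y")
  by (rule lin_eq2[of ?L ?R]) (intro lin_intros3 | simp only: bvec_triple mul3_tens3 rev3_tens3)+
lemma sw23_mul3: "sw23 (mul3 A X Y) = mul3 A (sw23 X) (sw23 Y)" (is "?L X Y = ?R X Y")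
  by (rule lin_eq2[of ?L ?R]) (intro lin_intros3 | simp only: bvec_triple mul3_tens3 sw23_tens3)+
lemma sw12_mul3: "sw12 (mul3 A X Y) = mul3 A (sw12 X) (sw12 Y)" (is "?L X Y = ?R X Y")
  by (rule lin_eq2[of ?L ?R]) (intro lin_intros3 | simp only: bvec_triple mul3_tens3 sw12_tens3)+

lemma sigA_leg12: "sigA (leg12 A X) = leg13 A (flip X)"
  by (rule lin_eq[of "\<lambda>X. sigA (leg12 A X)" "\<lambda>X. leg13 A (flip X)"])
     (intro lin_intros3 | simp only: bvec_pair leg12_tens leg13_tens sigA_tens3 flip_tens)+
lemma sigA_leg13: "sigA (leg13 A X) = leg23 A (flip X)"
  by (rule lin_eq[of "\<lambda>X. sigA (leg13 A X)" "\<lambda>X. leg23 A (flip X)"])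
     (intro lin_intros3 | simp only: bvec_pair leg13_tens leg23_tens sigA_tens3 flip_tens)+
lemma sigB_leg23: "sigB (leg23 A X) = leg13 A (flip X)"
  by (rule lin_eq[of "\<lambda>X. sigB (leg23 A X)" "\<lambda>X. leg13 A (flip X)"])
     (intro lin_intros3 | simp only: bvec_pair leg23_tens leg13_tens sigB_tens3 flip_tens)+
lemma sigB_leg13: "sigB (leg13 A X) = leg12 A (flip X)"
  by (rule lin_eq[of "\<lambda>X. sigB (leg13 A X)" "\<lambda>X. leg12 A (flip X)"])
     (intro lin_intros3 | simp only: bvec_pair leg13_tens leg12_tens sigB_tens3 flip_tens)+
lemma rev3_leg23: "rev3 (leg23 A X) = leg12 A (flip X)"
  by (rule lin_eq[of "\<lambda>X. rev3 (leg23 A X)" "\<lambda>X. leg12 A (flip X)"])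
     (intro lin_intros3 | simp only: bvec_pair leg23_tens leg12_tens rev3_tens3 flip_tens)+
lemma rev3_leg13: "rev3 (leg13 A X) = leg13 A (flip X)"
  by (rule lin_eq[of "\<lambda>X. rev3 (leg13 A X)" "\<lambda>X. leg13 A (flip X)"])
     (intro lin_intros3 | simp only: bvec_pair leg13_tens rev3_tens3 flip_tens)+
lemma rev3_leg12: "rev3 (leg12 A X) = leg23 A (flip X)"
  by (rule lin_eq[of "\<lambda>X. rev3 (leg12 A X)" "\<lambda>X. leg23 A (flip X)"])
     (intro lin_intros3 | simp only: bvec_pair leg12_tens leg23_tens rev3_tens3 flip_tens)+
lemma sw23_leg13: "sw23 (leg13 A X) = leg12 A X"
  by (rule lin_eq[of "\<lambda>X. sw23 (leg13 A X)" "\<lambda>X. leg12 A X"])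
     (intro lin_intros3 | simp only: bvec_pair leg13_tens leg12_tens sw23_tens3)+
lemma sw23_leg12: "sw23 (leg12 A X) = leg13 A X"
  by (rule lin_eq[of "\<lambda>X. sw23 (leg12 A X)" "\<lambda>X. leg13 A X"])
     (intro lin_intros3 | simp only: bvec_pair leg13_tens leg12_tens sw23_tens3)+
lemma sw12_leg13: "sw12 (leg13 A X) = leg23 A X"
  by (rule lin_eq[of "\<lambda>X. sw12 (leg13 A X)" "\<lambda>X. leg23 A X"])
     (intro lin_intros3 | simp only: bvec_pair leg13_tens leg23_tens sw12_tens3)+
lemma sw12_leg23: "sw12 (leg23 A X) = leg13 A X"
  by (rule lin_eq[of "\<lambda>X. sw12 (leg23 A X)" "\<lambda>X. leg13 A X"])
     (intro lin_intros3 | simp only: bvec_pair leg13_tens leg23_tens sw12_tens3)+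


lemma counit_bvec[simp]: "counit A (bvec a) = hcounit A a"
  by (simp add: counit_def)

lemma psiA_ext3L: "psiA A (ext3L Y z) = tens (epsL A Y) z" (is "?L Y z = ?R Y z")
  by (rule lin_eq2[of ?L ?R]; ((intro lin_intros3; fail))?; (simp only: bvec_pair ext3L_tens psiA_tens3)?; (simp add: epsL_def split_beta)?)
lemma psiB_ext3R: "psiB A (ext3R x Y) = tens x (epsL A Y)" (is "?L x Y = ?R x Y")
  by (rule lin_eq2[of ?L ?R]; ((intro lin_intros3; fail))?; (simp only: bvec_pair ext3R_tens psiB_tens3)?; (simp add: epsL_def split_beta)?)
lemma phiA_ext3L: "phiA A (ext3L Y z) = tens (lext (\<lambda>(a, b). mul A (antipode A (bvec a)) (bvec b)) Y) z" (is "?L Y z = ?R Y z")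
  by (rule lin_eq2[of ?L ?R]; ((intro lin_intros3; fail))?; (simp only: bvec_pair ext3L_tens phiA_tens3)?; (simp add: split_beta)?)
lemma phiB_ext3R: "phiB A (ext3R x Y) = tens x (lext (\<lambda>(a, b). mul A (bvec a) (antipode A (bvec b))) Y)" (is "?L x Y = ?R x Y")
  by (rule lin_eq2[of ?L ?R]; ((intro lin_intros3; fail))?; (simp only: bvec_pair ext3R_tens phiB_tens3)?; (simp add: split_beta)?)

lemma epsL_comul: "epsL A (comul A x) = x"
  using counit_ax_l by (simp add: epsL_def)

lemma psiA_comul_left: "psiA A (comul_left A X) = X"
  by (rule lin_eq[of "\<lambda>X. psiA A (comul_left A X)" "\<lambda>X. X"])
     (intro lin_intros3 | simp only: bvec_pair comul_left_tens psiA_ext3L epsL_comul)+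
lemma psiB_comul_right: "psiB A (comul_right A X) = X"
  by (rule lin_eq[of "\<lambda>X. psiB A (comul_right A X)" "\<lambda>X. X"])
     (intro lin_intros3 | simp only: bvec_pair comul_right_tens psiB_ext3R epsL_comul)+
lemma phiA_comul_left: "phiA A (comul_left A X) = tens (one A) (epsL A X)"
  by (rule lin_eq[of "\<lambda>X. phiA A (comul_left A X)" "\<lambda>X. tens (one A) (epsL A X)"];
     ((intro lin_intros3; fail))?; (simp only: bvec_pair comul_left_tens phiA_ext3L antipode_ax_l)?; (simp add: epsL_def split_beta)?)
lemma phiB_comul_right: "phiB A (comul_right A X) = tens (epsR A X) (one A)"
  by (rule lin_eq[of "\<lambda>X. phiB A (comul_right A X)" "\<lambda>X. tens (epsR A X) (one A)"];
     ((intro lin_intros3; fail))?; (simp only: bvec_pair comul_right_tens phiB_ext3R antipode_ax_r)?; (simp add: epsR_def split_beta)?)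

lemma C3: "phiA A (mul3 A (leg13 A X) (leg23 A Y)) = mul2 A (SL A X) Y" (is "?L X Y = ?R X Y")
  by (rule lin_eq2[of ?L ?R]) (intro lin_intros3 | simp only: bvec_pair leg13_tens leg23_tens mul3_tens3 phiA_tens3 SL_tens mul2_tens mul_one_l mul_one_r)+
lemma C4: "psiA A (mul3 A (leg13 A X) (leg23 A Y)) = mul2 A (tens (one A) (epsL A X)) Y" (is "?L X Y = ?R X Y")
  by (rule lin_eq2[of ?L ?R]; ((intro lin_intros3; fail))?; (simp only: bvec_pair leg13_tens leg23_tens mul3_tens3 psiA_tens3 mul2_tens mul_one_l mul_one_r)?; (simp add: epsL_def split_beta)?)
lemma C5: "phiB A (mul3 A (leg13 A X) (leg12 A Y)) = act A (SR A X) Y" (is "?L X Y = ?R X Y")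
  by (rule lin_eq2[of ?L ?R]) (intro lin_intros3 | simp only: bvec_pair leg13_tens leg12_tens mul3_tens3 phiB_tens3 SR_tens act_tens mul_one_l mul_one_r)+
lemma C6: "psiB A (mul3 A (leg13 A X) (leg12 A Y)) = mul2 A X (tens (epsR A Y) (one A))" (is "?L X Y = ?R X Y")
  by (rule lin_eq2[of ?L ?R]; ((intro lin_intros3; fail))?; (simp only: bvec_pair leg13_tens leg12_tens mul3_tens3 psiB_tens3 mul2_tens mul_one_l mul_one_r)?; (simp add: epsR_def split_beta)?)
lemma C7: "phiA A (mul3 A (leg23 A X) (leg13 A Y)) = BB A X Y" (is "?L X Y = ?R X Y")
  by (rule lin_eq2[of ?L ?R]) (intro lin_intros3 | simp only: bvec_pair leg13_tens leg23_tens mul3_tens3 phiA_tens3 BB_tens mul_one_l mul_one_r)+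
lemma C8: "psiA A (mul3 A (leg23 A X) (leg13 A Y)) = mul2 A X (tens (one A) (epsL A Y))" (is "?L X Y = ?R X Y")
  by (rule lin_eq2[of ?L ?R]; ((intro lin_intros3; fail))?; (simp only: bvec_pair leg13_tens leg23_tens mul3_tens3 psiA_tens3 mul2_tens mul_one_l mul_one_r)?; (simp add: epsL_def split_beta)?)
lemma C9: "phiB A (mul3 A (leg12 A X) (leg13 A Y)) = mul2 A X (SR A Y)" (is "?L X Y = ?R X Y")
  by (rule lin_eq2[of ?L ?R]) (intro lin_intros3 | simp only: bvec_pair leg13_tens leg12_tens mul3_tens3 phiB_tens3 SR_tens mul2_tens mul_one_l mul_one_r)+
lemma C10: "psiB A (mul3 A (leg12 A X) (leg13 A Y)) = mul2 A (tens (epsR A X) (one A)) Y" (is "?L X Y = ?R X Y")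
  by (rule lin_eq2[of ?L ?R]; ((intro lin_intros3; fail))?; (simp only: bvec_pair leg13_tens leg12_tens mul3_tens3 psiB_tens3 mul2_tens mul_one_l mul_one_r)?; (simp add: epsR_def split_beta)?)


lemma flip_bvec: "flip (bvec q) = (bvec (snd q, fst q) :: _ \<Rightarrow>\<^sub>0 'k::field)"
  by (simp add: flip_def split_beta)

lemma actBB: "act A (flip X) (SR A (flip Y)) = flip (BB A X Y)" (is "?L X Y = ?R X Y")
  by (rule lin_eq2[of ?L ?R]) (intro lin_intros3 | simp only: bvec_pair flip_tens SR_tens act_tens BB_tens)+

lemma flip_SL_flip: "flip (SL A (flip X)) = SR A X"
  by (rule lin_eq[of "\<lambda>X. flip (SL A (flip X))" "SR A"])
     (intro lin_intros3 | simp only: bvec_pair flip_tens SR_tens SL_tens)+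

lemma act_zero1[simp]: "act A 0 X = 0"
  using lin_zero[OF lin_act1[OF lin_id]] by blast
lemma mul2_zero1[simp]: "mul2 A 0 X = 0"
  using lin_zero[OF lin_mul2_1[OF lin_id]] by blast
lemma act_add1: "act A (X + Y) Z = act A X Z + act A Y Z"
  using lin_addD[OF lin_act1[OF lin_id]] by blast
lemma mul2_add1: "mul2 A (X + Y) Z = mul2 A X Z + mul2 A Y Z"
  using lin_addD[OF lin_mul2_1[OF lin_id]] by blast

lemma act_central: "central A z \<Longrightarrow> act A (tens h z) X = mul2 A (tens h z) X"
  unfolding central_def
  by (rule lin_eq[of "act A (tens h z)" "mul2 A (tens h z)"])
     (intro lin_intros3 | simp only: bvec_pair act_tens mul2_tens | simp)+

lemma act_HZ: "Z \<in> H_tensor_center A \<Longrightarrow> act A Z X = mul2 A Z X"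
  by (induction rule: H_tensor_center.induct) (simp_all add: act_add1 mul2_add1 act_central)

lemma act_mul2_central: "central A z \<Longrightarrow> act A (mul2 A (tens h z) N) X = mul2 A (tens h z) (act A N X)"
  unfolding central_def
  by (rule lin_eq2[of "\<lambda>N X. act A (mul2 A (tens h z) N) X" "\<lambda>N X. mul2 A (tens h z) (act A N X)"])
     (intro lin_intros3 | simp only: bvec_pair act_tens mul2_tens mul_assoc | simp add: mul_assoc[symmetric])+

lemma act_mul2_HZ: "Z \<in> H_tensor_center A \<Longrightarrow> act A (mul2 A Z N) X = mul2 A Z (act A N X)"
  by (induction rule: H_tensor_center.induct) (simp_all add: act_add1 mul2_add1 act_mul2_central)

lemma inv3: "mul3 A X B = one3 A \<Longrightarrow> mul3 A B Y = one3 A \<Longrightarrow> X = Y"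
  by (metis mul3_assoc mul3_one_l mul3_one_r)

lemma inv2: "mul2 A X B = one2 A \<Longrightarrow> mul2 A B Y = one2 A \<Longrightarrow> X = Y"
  by (metis mul2_assoc mul2_one_l mul2_one_r)


lemma Mh_tens: "Mh A h (tens u v) = lext (\<lambda>c. tens (mul A u (bvec (fst (snd c))))
    (mul A (mul A (antipode A (bvec (fst c))) v) (bvec (snd (snd c))))) (comul3 A h)"
  (is "?L u v = ?R u v")
proof (rule lin_eq2[of ?L ?R])
  show "lin (\<lambda>u. ?L u v)" for v by (intro lin_intros3)
  show "lin (\<lambda>v. ?L u v)" for u by (intro lin_intros3)
  show "lin (\<lambda>u. ?R u v)" for v
    by (rule lin_lext_fun[where F="\<lambda>c u. tens (mul A u (bvec (fst (snd c))))
      (mul A (mul A (antipode A (bvec (fst c))) v) (bvec (snd (snd c))))", OF _ lin_id])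
       (intro lin_intros3)
  show "lin (\<lambda>v. ?R u v)" for u
    by (rule lin_lext_fun[where F="\<lambda>c v. tens (mul A u (bvec (fst (snd c))))
      (mul A (mul A (antipode A (bvec (fst c))) v) (bvec (snd (snd c))))", OF _ lin_id])
       (intro lin_intros3)
  show "?L (bvec a) (bvec b) = ?R (bvec a) (bvec b)" for a b
    by (simp add: Mh_def cp_eta)
qed

definition nuG :: "('i \<Rightarrow>\<^sub>0 'k) \<Rightarrow> ('i \<times> 'i \<Rightarrow>\<^sub>0 'k) \<Rightarrow> ('i \<times> 'i \<Rightarrow>\<^sub>0 'k) \<Rightarrow> ('i \<times> 'i \<Rightarrow>\<^sub>0 'k)" where
  "nuG h = bext (\<lambda>(a, b) (a', b'). lext (\<lambda>(c1, c2, c3).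
      tens (mul A (mul A (bvec b) (bvec c2)) (bvec b'))
           (mul A (mul A (mul A (antipode A (bvec c1)) (antipode A (bvec a))) (bvec c3)) (bvec a')))
    (comul3 A h))"

definition nu6G :: "('i \<Rightarrow>\<^sub>0 'k) \<Rightarrow> ('i \<times> 'i \<Rightarrow>\<^sub>0 'k) \<Rightarrow> ('i \<times> 'i \<Rightarrow>\<^sub>0 'k) \<Rightarrow> ('i \<times> 'i \<Rightarrow>\<^sub>0 'k)" where
  "nu6G h = bext (\<lambda>(a, b) (a', b'). lext (\<lambda>(c1, c2, c3).
      tens (mul A (mul A (bvec a) (bvec c2)) (bvec a'))
           (mul A (mul A (mul A (antipode A (bvec b')) (antipode A (bvec c1))) (bvec b)) (bvec c3)))
    (comul3 A h))"

lemma nu_nuG: "nu A X h = nuG h X X"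
  by (simp add: nu_def nuG_def bext_def cp_eta)
lemma nu6_nu6G: "nu6 A X h = nu6G h X X"
  by (simp add: nu6_def nu6G_def bext_def cp_eta)

lemma mul2_tens_bvec: "mul2 A (tens a b) (bvec (c, d)) = tens (mul A a (bvec c)) (mul A b (bvec d))"
  using mul2_tens[of A a b "bvec c" "bvec d"] by simp

lemma nuG_eq: "nuG h X Y = mul2 A (Mh A h (flip (SL A X))) (flip Y)" (is "?L X Y = ?R X Y")
proof (rule lin_eq2[of ?L ?R])
  show "lin (\<lambda>x. ?L x Y)" for Y unfolding nuG_def by (intro lin_intros3)
  show "lin (\<lambda>x. ?L X x)" for X unfolding nuG_def by (intro lin_intros3)
  show "lin (\<lambda>x. ?R x Y)" for Y by (intro lin_intros3)
  show "lin (\<lambda>x. ?R X x)" for X by (intro lin_intros3)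
  show "?L (bvec p) (bvec q) = ?R (bvec p) (bvec q)" for p q
    by (simp add: nuG_def SL_def flip_bvec Mh_tens mul2_lext1 mul2_tens_bvec cp_eta)
qed

lemma nu6G_eq: "nu6G h X Y = act A (Mh A h X) (SR A Y)" (is "?L X Y = ?R X Y")
proof (rule lin_eq2[of ?L ?R])
  show "lin (\<lambda>x. ?L x Y)" for Y unfolding nu6G_def by (intro lin_intros3)
  show "lin (\<lambda>x. ?L X x)" for X unfolding nu6G_def by (intro lin_intros3)
  show "lin (\<lambda>x. ?R x Y)" for Y by (intro lin_intros3)
  show "lin (\<lambda>x. ?R X x)" for X by (intro lin_intros3)
  show "?L (bvec p) (bvec q) = ?R (bvec p) (bvec q)" for p q
    by (simp add: nu6G_def SR_def Mh_def act_lext1 act_tens cp_eta mul_assoc)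
qed


lemma main:
  assumes RP: "mul2 A R P = one2 A" and PR: "mul2 A P R = one2 A"
    and s1: "comul_left A R = mul3 A (leg13 A R) (leg23 A R)"
    and s2: "comul_right A R = mul3 A (leg13 A R) (leg12 A R)"
    and s3: "mul3 A (comulop_right A R) (leg23 A R) = mul3 A (leg23 A R) (comul_right A R)"
    and s5: "\<And>h. nu A R h \<in> H_tensor_center A"
    and s6: "\<And>h. nu A R h = nu6 A R h"
  shows "semiquasitriangular A (flip P)"
proof -
  have e1: "tens (one A) (epsL A R) = one2 A"
  proof -
    have "R = mul2 A (tens (one A) (epsL A R)) R"
      using psiA_comul_left[of R] s1 C4 by simp
    then have "mul2 A R P = mul2 A (tens (one A) (epsL A R)) (mul2 A R P)"
      by (metis mul2_assoc)
    then show ?thesis using RP by simp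
  qed
  have SLR: "SL A R = P"
  proof -
    have "mul2 A (SL A R) R = one2 A"
      using phiA_comul_left[of R] s1 C3 e1 by simp
    then show ?thesis using inv2 RP by blast
  qed
  have e2: "tens (epsR A R) (one A) = one2 A"
  proof -
    have "R = mul2 A R (tens (epsR A R) (one A))"
      using psiB_comul_right[of R] s2 C6 by simp
    then have "mul2 A P R = mul2 A (mul2 A P R) (tens (epsR A R) (one A))"
      by (metis mul2_assoc)
    then show ?thesis using PR by simp
  qed
  have actR: "act A (SR A R) R = one2 A"
    using phiB_comul_right[of R] s2 C5 e2 by simp
  have l12: "mul3 A (leg12 A P) (leg12 A R) = one3 A" "mul3 A (leg12 A R) (leg12 A P) = one3 A"
    using leg12_mul2[of P R] leg12_mul2[of R P] RP PR by simp_all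
  have l13: "mul3 A (leg13 A P) (leg13 A R) = one3 A" "mul3 A (leg13 A R) (leg13 A P) = one3 A"
    using leg13_mul2[of P R] leg13_mul2[of R P] RP PR by simp_all
  have l23: "mul3 A (leg23 A P) (leg23 A R) = one3 A" "mul3 A (leg23 A R) (leg23 A P) = one3 A"
    using leg23_mul2[of P R] leg23_mul2[of R P] RP PR by simp_all
  have canc: "\<And>X Y Z. mul3 A X Y = one3 A \<Longrightarrow> mul3 A X (mul3 A Y Z) = Z"
    by (metis mul3_assoc mul3_one_l)
  note c = canc[OF l12(1)] canc[OF l12(2)] canc[OF l13(1)] canc[OF l13(2)] canc[OF l23(1)] canc[OF l23(2)]
  have cr: "comul_right A P = mul3 A (leg12 A P) (leg13 A P)"
  proof (rule inv3)
    show "mul3 A (comul_right A P) (comul_right A R) = one3 A"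
      using comul_right_mul2[of P R] PR by simp
    show "mul3 A (comul_right A R) (mul3 A (leg12 A P) (leg13 A P)) = one3 A"
      using s2 c l13 by (simp add: mul3_assoc)
  qed
  have cl: "comul_left A P = mul3 A (leg23 A P) (leg13 A P)"
  proof (rule inv3)
    show "mul3 A (comul_left A P) (comul_left A R) = one3 A"
      using comul_left_mul2[of P R] PR by simp
    show "mul3 A (comul_left A R) (mul3 A (leg23 A P) (leg13 A P)) = one3 A"
      using s1 c l13 by (simp add: mul3_assoc)
  qed
  have e3: "tens (one A) (epsL A P) = one2 A"
  proof -
    have "P = mul2 A P (tens (one A) (epsL A P))"
      using psiA_comul_left[of P] cl C8 by simp
    then have "mul2 A R P = mul2 A (mul2 A R P) (tens (one A) (epsL A P))"
      by (metis mul2_assoc)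
    then show ?thesis using RP by simp
  qed
  have BBP: "BB A P P = one2 A"
    using phiA_comul_left[of P] cl C7 e3 by simp
  have e4: "tens (epsR A P) (one A) = one2 A"
  proof -
    have "P = mul2 A (tens (epsR A P) (one A)) P"
      using psiB_comul_right[of P] cr C10 by simp
    then have "mul2 A P R = mul2 A (tens (epsR A P) (one A)) (mul2 A P R)"
      by (metis mul2_assoc)
    then show ?thesis using PR by simp
  qed
  have SRP: "SR A P = R"
  proof -
    have "mul2 A P (SR A P) = one2 A"
      using phiB_comul_right[of P] cr C9 e4 by simp
    then show ?thesis using inv2 RP by metis
  qed
  define Q where "Q = flip P"
  have inv: "invertible2 A Q"
    unfolding invertible2_def Q_def
    by (rule exI[of _ "flip R"]) (simp add: flip_mul2[symmetric] RP PR)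
  have q1: "comul_left A Q = mul3 A (leg13 A Q) (leg23 A Q)"
    unfolding Q_def by (simp add: comul_left_flip cr sigA_mul3 sigA_leg12 sigA_leg13)
  have q2: "comul_right A Q = mul3 A (leg13 A Q) (leg12 A Q)"
    unfolding Q_def by (simp add: comul_right_flip cl sigB_mul3 sigB_leg23 sigB_leg13)
  have ybeR: "mul3 A (leg12 A R) (mul3 A (leg13 A R) (leg23 A R)) =
      mul3 A (leg23 A R) (mul3 A (leg13 A R) (leg12 A R))"
    using s3 s2 by (simp add: comulop_right_sw sw23_mul3 sw23_leg13 sw23_leg12 mul3_assoc)
  have ybeP: "mul3 A (leg23 A P) (mul3 A (leg13 A P) (leg12 A P)) =
      mul3 A (leg12 A P) (mul3 A (leg13 A P) (leg23 A P))"
  proof (rule inv3)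
    show "mul3 A (mul3 A (leg23 A P) (mul3 A (leg13 A P) (leg12 A P)))
        (mul3 A (leg12 A R) (mul3 A (leg13 A R) (leg23 A R))) = one3 A"
      using c l23 by (simp add: mul3_assoc)
    show "mul3 A (mul3 A (leg12 A R) (mul3 A (leg13 A R) (leg23 A R)))
        (mul3 A (leg12 A P) (mul3 A (leg13 A P) (leg23 A P))) = one3 A"
      unfolding ybeR using c l12 l13 l23 by (simp add: mul3_assoc)
  qed
  have ybeQ: "mul3 A (leg12 A Q) (mul3 A (leg13 A Q) (leg23 A Q)) =
      mul3 A (leg23 A Q) (mul3 A (leg13 A Q) (leg12 A Q))"
    using arg_cong[OF ybeP, of rev3] unfolding Q_def
    by (simp add: rev3_mul3 rev3_leg12 rev3_leg13 rev3_leg23)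
  have q3: "mul3 A (comulop_right A Q) (leg23 A Q) = mul3 A (leg23 A Q) (comul_right A Q)"
    using ybeQ by (simp add: comulop_right_sw q2 sw23_mul3 sw23_leg13 sw23_leg12 mul3_assoc)
  have q4: "mul3 A (comulop_left A Q) (leg12 A Q) = mul3 A (leg12 A Q) (comul_left A Q)"
    using ybeQ by (simp add: comulop_left_sw q1 sw12_mul3 sw12_leg13 sw12_leg23 mul3_assoc)
  have nuQ: "nu A Q h = nu A R h \<and> nu6 A Q h = nu A R h" for h
  proof -
    define Z where "Z = nu A R h"
    have ZHZ: "Z \<in> H_tensor_center A" using s5 Z_def by simp
    have Z1: "Z = mul2 A (Mh A h Q) (flip R)"
      unfolding Z_def nu_nuG nuG_eq SLR Q_def ..
    have Z2: "Z = act A (Mh A h R) (SR A R)"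
      unfolding Z_def s6 nu6_nu6G nu6G_eq ..
    have "mul2 A Z R = Mh A h R"
      using act_HZ[OF ZHZ, of R] Z2 actR by (simp add: act_assoc)
    then have a: "nu A Q h = Z"
      unfolding Q_def nu_nuG nuG_eq flip_SL_flip SRP flip_flip
      by (metis RP mul2_assoc mul2_one_r)
    have "mul2 A Z Q = Mh A h Q"
      unfolding Z1 Q_def by (simp add: mul2_assoc flip_mul2[symmetric] RP)
    then have b: "nu6 A Q h = Z"
      unfolding nu6_nu6G nu6G_eq
      using act_mul2_HZ[OF ZHZ, of Q "SR A Q"] actBB[of P P] BBP unfolding Q_def
      by simp
    show ?thesis using a b Z_def by simp
  qed
  show ?thesis
    unfolding semiquasitriangular_def Q_def[symmetric]
    using hopf inv q1 q2 q3 q4 nuQ s5 by simp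
qed

end

theorem proposition1p10:
  fixes A :: "('i, 'k::field) hopf_data"
    and R Rinv :: "'i \<times> 'i \<Rightarrow>\<^sub>0 'k"
  assumes "hopf_algebra A"
    and "semiquasitriangular A R"
    and "mul2 A R Rinv = one2 A"
    and "mul2 A Rinv R = one2 A"
  shows "semiquasitriangular A (flip Rinv)"
proof -
  interpret hopf A by (rule hopf.intro) (rule assms(1))
  have h: "comul_left A R = mul3 A (leg13 A R) (leg23 A R)"
    "comul_right A R = mul3 A (leg13 A R) (leg12 A R)"
    "mul3 A (comulop_right A R) (leg23 A R) = mul3 A (leg23 A R) (comul_right A R)"
    "\<And>h. nu A R h \<in> H_tensor_center A"
    "\<And>h. nu A R h = nu6 A R h"
    using assms(2) unfolding semiquasitriangular_def by blast+
  show ?thesis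
    by (rule main[OF assms(3) assms(4) h])
qed

end
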